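(* For every integer $n \geq 1$, $$B_n = -\sum_{k=1}^{n} \frac{n}{k}\, S(n-1,k-1)\, B_k^*.$$
   Context: For $n \geq 0$, $X^{\underline{n}} := X(X-1)\cdots(X-n+1)$ ($X^{\underline{0}}=1$). The Stirling numbers of the second kind $S(n,k)$ are defined by $X^n = \sum_{k=0}^{n} S(n,k) X^{\underline{k}}$ for all $n\ge 0$, with $S(n,k)=0$ when $n<k$. The Bernoulli numbers $B_n$ are defined by $\frac{t}{e^t-1} = \sum_{n\ge 0} B_n \frac{t^n}{n!}$. The Bernoulli numbers of the second kind $B_n^*$ are defined by $\frac{t}{\log(1+t)} = \sum_{n \ge 0} B_n^* \frac{t^n}{n!}$ (equivalently $B_n^* = \int_0^1 x^{\underline{n}}\,dx$). *)

theory Defs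
  imports "HOL-Computational_Algebra.Formal_Power_Series" "HOL-Combinatorics.Stirling"
begin

text \<open>Bernoulli numbers: t/(e^t - 1) = sum B_n t^n/n! (so B_1 = -1/2).\<close>
definition bernoulli :: "nat \<Rightarrow> real" where
  "bernoulli n = fact n * fps_nth (fps_X / (fps_exp 1 - 1)) n"

text \<open>Bernoulli numbers of the second kind: t/log(1+t) = sum B*_n t^n/n!.
  Here fps_ln 1 is the power series of log(1+t).\<close>
definition bernoulli2 :: "nat \<Rightarrow> real" where
  "bernoulli2 n = fact n * fps_nth (fps_X / fps_ln 1) n"

end

theory Submission imports Defs begin
unbundle fps_syntax

lemma T_pow_nth_gen:
  fixes T :: "real fps"
  assumes e: "fps_deriv T = T + 1" and z: "T $ 0 = 0"
  shows "(T ^ k) $ n = fact k * real (Stirling n k) / fact n"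
proof (induction n arbitrary: k)
  case 0
  then show ?case using z by (cases k) auto
next
  case (Suc n)
  show ?case
  proof (cases k)
    case 0
    then show ?thesis by simp
  next
    case (Suc j)
    have d: "fps_deriv (T ^ Suc j) = of_nat (Suc j) * T ^ Suc j + of_nat (Suc j) * T ^ j"
    proof -
      have "fps_deriv (T ^ Suc j) = of_nat (Suc j) * fps_deriv T * T ^ j"
        by (simp only: fps_deriv_power') simp
      also have "\<dots> = of_nat (Suc j) * (T + 1) * T ^ j" by (simp only: e)
      finally show ?thesis by (simp add: algebra_simps)
    qed
    have "of_nat (Suc n) * (T ^ Suc j) $ Suc n = fps_deriv (T ^ Suc j) $ n"
      by (simp only: fps_deriv_nth Suc_eq_plus1)
    also have "\<dots> = of_nat (Suc j) * ((T ^ Suc j) $ n + (T ^ j) $ n)"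
      unfolding d fps_add_nth fps_of_nat[symmetric] fps_mult_left_const_nth by (simp only: distrib_left)
    also have "\<dots> = fact (Suc j) * real (Stirling (Suc n) (Suc j)) / fact n"
      unfolding Suc.IH[of "Suc j"] Suc.IH[of j] Stirling.simps(4)
      by (simp add: field_simps)
    finally have "of_nat (Suc n) * (T ^ Suc j) $ Suc n = fact (Suc j) * real (Stirling (Suc n) (Suc j)) / fact n" .
    then have "(T ^ Suc j) $ Suc n = fact (Suc j) * real (Stirling (Suc n) (Suc j)) / (of_nat (Suc n) * fact n)"
      by (simp add: field_simps del: power_Suc fact_Suc of_nat_Suc Stirling.simps)
    then show ?thesis using Suc by (simp only: fact_Suc of_nat_mult)
  qed
qed

lemma T_pow_nth: "((fps_exp (1::real) - 1) ^ k) $ n = fact k * real (Stirling n k) / fact n"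
  by (rule T_pow_nth_gen) auto

lemma div_X_mult:
  fixes g :: "real fps"
  assumes "g $ 0 = 0" "g $ 1 \<noteq> 0"
  shows "(fps_X / g) * g = fps_X"
proof -
  have g0: "g \<noteq> 0" using assms(2) by auto
  have "subdegree g = 1" by (rule subdegreeI) (use assms in auto)
  then have "g dvd fps_X" using g0 by (simp add: fps_dvd_iff)
  then show ?thesis by simp
qed

theorem corollary1:
  fixes n :: nat
  assumes "n \<ge> 1"
  shows "bernoulli n =
    - (\<Sum>k=1..n. (real n / real k) * real (Stirling (n - 1) (k - 1)) * bernoulli2 k)"
proof -
  define T :: "real fps" where "T = fps_exp 1 - 1"
  define L :: "real fps" where "L = fps_ln 1"
  define Bf where "Bf = fps_X / T"
  define Cf where "Cf = fps_X / L"
  define G where "G = fps_shift 1 Cf"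
  have T0: "T $ 0 = 0" and T1: "T $ 1 \<noteq> 0" by (simp_all add: T_def)
  have L0: "L $ 0 = 0" and L1: "L $ 1 = 1" by (simp_all add: L_def fps_ln_nth)
  have BT: "Bf * T = fps_X" unfolding Bf_def by (rule div_X_mult[OF T0 T1])
  have CL: "Cf * L = fps_X" unfolding Cf_def by (rule div_X_mult) (use L0 L1 in auto)
  have LT: "L oo T = fps_X"
    unfolding L_def T_def using fps_ln_fps_exp_inv[of "1::real"] fps_inv[of "fps_exp (1::real) - 1"]
    by simp
  have "(Cf * L) $ 1 = Cf $ 0"
    using L0 L1 by (simp add: fps_mult_nth)
  then have C0: "Cf $ 0 = 1" using CL by simp
  have CG: "Cf = 1 + fps_X * G"
  proof (rule fps_ext)
    fix m show "Cf $ m = (1 + fps_X * G) $ m"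
      by (cases m) (simp_all add: C0 G_def)
  qed
  have "(Cf oo T) * fps_X = T"
  proof -
    have "(Cf * L) oo T = (Cf oo T) * (L oo T)" by (rule fps_compose_mult_distrib[OF T0])
    then show ?thesis using CL LT T0 by simp
  qed
  moreover have "Cf oo T = 1 + T * (G oo T)"
    unfolding CG using T0
    by (simp add: fps_compose_add_distrib fps_compose_mult_distrib)
  ultimately have eq1: "(1 + T * (G oo T)) * fps_X = T" by simp
  have "fps_X * (Bf + fps_X * (G oo T)) = fps_X * 1"
  proof -
    have "fps_X * (Bf + fps_X * (G oo T)) = Bf * ((1 + T * (G oo T)) * fps_X)"
      using BT by (simp add: algebra_simps)
    also have "\<dots> = fps_X" using eq1 BT by simp
    finally show ?thesis by simp
  qed
  then have eq2: "Bf + fps_X * (G oo T) = 1"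
    by (subst (asm) mult_left_cancel) simp_all
  obtain m where m: "n = Suc m" using assms by (cases n) auto
  have Bm: "Bf $ n = - (G oo T) $ m"
  proof -
    have "(Bf + fps_X * (G oo T)) $ n = 0" using eq2 m by simp
    then show ?thesis using m by simp
  qed
  have Gm: "(G oo T) $ m = (\<Sum>i=0..m. Cf $ Suc i * (fact i * real (Stirling m i) / fact m))"
    by (simp add: fps_compose_nth G_def T_def T_pow_nth)
  have Bn: "Bf $ n = - (\<Sum>i=0..m. Cf $ Suc i * (fact i * real (Stirling m i) / fact m))"
    using Bm Gm by simp
  have "bernoulli n = fact n * Bf $ n"
    by (simp add: bernoulli_def Bf_def T_def)
  also have "\<dots> = - (\<Sum>i=0..m. fact n * (Cf $ Suc i * (fact i * real (Stirling m i) / fact m)))"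
    unfolding Bn by (simp add: sum_distrib_left)
  also have "\<dots> = - (\<Sum>i=0..m. (real n / real (Suc i)) * real (Stirling (n - 1) (Suc i - 1)) * bernoulli2 (Suc i))"
    by (intro arg_cong[where f=uminus] sum.cong refl)
       (simp add: bernoulli2_def Cf_def L_def m field_simps)
  also have "\<dots> = - (\<Sum>k=1..n. (real n / real k) * real (Stirling (n - 1) (k - 1)) * bernoulli2 k)"
    using m sum.shift_bounds_cl_Suc_ivl[of "\<lambda>k. (real n / real k) * real (Stirling (n - 1) (k - 1)) * bernoulli2 k" 0 m]
    by (simp only: One_nat_def diff_Suc_1)
  finally show ?thesis .
qed
end
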